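(* Let $H$ be a monoid. Then: (i) if $\mathcal{P}_{\mathrm{fin},1}(H)$ is HmF, then every element of $H$ has order $\le 3$; (ii) if $\mathcal{P}_{\mathrm{fin},1}(H)$ is UmF, then every element of $H$ has order $\le 2$. In either case, $H$ is periodic (every element has finite order) and hence Dedekind-finite.
   Context: The order of an element $x$ of a monoid is the cardinality of the submonoid it generates. A monoid $M$ is Dedekind-finite if $xy=1_M$ implies $yx=1_M$. $\mathcal{P}_{\mathrm{fin},1}(H)$ denotes the set of non-empty finite subsets of $H$ containing $1_H$, a monoid under $XY=\{xy:x\in X,y\in Y\}$. In a monoid $M$: $x\mid_M y$ iff $y\in MxM$; $x,y$ are associated if each divides the other; proper divisor means divides but not associated. A unit-divisor divides $1_M$; otherwise it is a non-unit-divisor. An irreducible is a non-unit-divisor $a$ with $a\neq xy$ for all non-unit-divisors $x,y$ properly dividing $a$. A factorization of $x$ is a finite word over the irreducibles with product $x$; its length is its number of letters. For words $\mathfrak a,\mathfrak b$, $\mathfrak a\sqsubseteq\mathfrak b$ means $\mathfrak a$ is, up to associatedness of letters, a subword (subsequence) of some permutation of $\mathfrak b$; equivalence means $\sqsubseteq$ both ways. A factorization $\mathfrak a$ of $x$ is minimal if no factorization $\mathfrak b$ of $x$ satisfies $\mathfrak b\sqsubseteq\mathfrak a\not\sqsubseteq\mathfrak b$. $M$ is HmF if every non-unit-divisor has a factorization and all minimal factorizations of any element have the same length; UmF if every non-unit-divisor has a factorization and any two minimal factorizations of an element are equivalent. *)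

theory Defs
  imports Main "HOL-Library.Multiset" "HOL-Library.Sublist"
begin

definition mdvd :: "'b set \<Rightarrow> ('b \<Rightarrow> 'b \<Rightarrow> 'b) \<Rightarrow> 'b \<Rightarrow> 'b \<Rightarrow> bool" where
  "mdvd M p x y \<longleftrightarrow> x \<in> M \<and> y \<in> M \<and> (\<exists>u\<in>M. \<exists>v\<in>M. y = p (p u x) v)"

definition massoc :: "'b set \<Rightarrow> ('b \<Rightarrow> 'b \<Rightarrow> 'b) \<Rightarrow> 'b \<Rightarrow> 'b \<Rightarrow> bool" where
  "massoc M p x y \<longleftrightarrow> mdvd M p x y \<and> mdvd M p y x"

definition mproper_dvd :: "'b set \<Rightarrow> ('b \<Rightarrow> 'b \<Rightarrow> 'b) \<Rightarrow> 'b \<Rightarrow> 'b \<Rightarrow> bool" where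
  "mproper_dvd M p x y \<longleftrightarrow> mdvd M p x y \<and> \<not> massoc M p x y"

definition unit_divisor :: "'b set \<Rightarrow> ('b \<Rightarrow> 'b \<Rightarrow> 'b) \<Rightarrow> 'b \<Rightarrow> 'b \<Rightarrow> bool" where
  "unit_divisor M p e x \<longleftrightarrow> mdvd M p x e"

definition non_unit_divisor :: "'b set \<Rightarrow> ('b \<Rightarrow> 'b \<Rightarrow> 'b) \<Rightarrow> 'b \<Rightarrow> 'b \<Rightarrow> bool" where
  "non_unit_divisor M p e x \<longleftrightarrow> x \<in> M \<and> \<not> unit_divisor M p e x"

definition mirreducible :: "'b set \<Rightarrow> ('b \<Rightarrow> 'b \<Rightarrow> 'b) \<Rightarrow> 'b \<Rightarrow> 'b \<Rightarrow> bool" where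
  "mirreducible M p e a \<longleftrightarrow> non_unit_divisor M p e a \<and>
     (\<forall>x y. non_unit_divisor M p e x \<longrightarrow> non_unit_divisor M p e y \<longrightarrow>
        mproper_dvd M p x a \<longrightarrow> mproper_dvd M p y a \<longrightarrow> a \<noteq> p x y)"

definition wprod :: "('b \<Rightarrow> 'b \<Rightarrow> 'b) \<Rightarrow> 'b \<Rightarrow> 'b list \<Rightarrow> 'b" where
  "wprod p e w = foldr p w e"

definition factorization :: "'b set \<Rightarrow> ('b \<Rightarrow> 'b \<Rightarrow> 'b) \<Rightarrow> 'b \<Rightarrow> 'b \<Rightarrow> 'b list \<Rightarrow> bool" where
  "factorization M p e x w \<longleftrightarrow> (\<forall>a\<in>set w. mirreducible M p e a) \<and> wprod p e w = x"

definition subword_le :: "'b set \<Rightarrow> ('b \<Rightarrow> 'b \<Rightarrow> 'b) \<Rightarrow> 'b list \<Rightarrow> 'b list \<Rightarrow> bool" where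
  "subword_le M p a b \<longleftrightarrow>
     (\<exists>c d. mset c = mset b \<and> subseq d c \<and> list_all2 (massoc M p) a d)"

definition word_equiv :: "'b set \<Rightarrow> ('b \<Rightarrow> 'b \<Rightarrow> 'b) \<Rightarrow> 'b list \<Rightarrow> 'b list \<Rightarrow> bool" where
  "word_equiv M p a b \<longleftrightarrow> subword_le M p a b \<and> subword_le M p b a"

definition minimal_factorization :: "'b set \<Rightarrow> ('b \<Rightarrow> 'b \<Rightarrow> 'b) \<Rightarrow> 'b \<Rightarrow> 'b \<Rightarrow> 'b list \<Rightarrow> bool" where
  "minimal_factorization M p e x a \<longleftrightarrow> factorization M p e x a \<and>
     \<not> (\<exists>b. factorization M p e x b \<and> subword_le M p b a \<and> \<not> subword_le M p a b)"

definition HmF :: "'b set \<Rightarrow> ('b \<Rightarrow> 'b \<Rightarrow> 'b) \<Rightarrow> 'b \<Rightarrow> bool" where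
  "HmF M p e \<longleftrightarrow>
     (\<forall>x. non_unit_divisor M p e x \<longrightarrow> (\<exists>w. factorization M p e x w)) \<and>
     (\<forall>x\<in>M. \<forall>a b. minimal_factorization M p e x a \<longrightarrow> minimal_factorization M p e x b
        \<longrightarrow> length a = length b)"

definition UmF :: "'b set \<Rightarrow> ('b \<Rightarrow> 'b \<Rightarrow> 'b) \<Rightarrow> 'b \<Rightarrow> bool" where
  "UmF M p e \<longleftrightarrow>
     (\<forall>x. non_unit_divisor M p e x \<longrightarrow> (\<exists>w. factorization M p e x w)) \<and>
     (\<forall>x\<in>M. \<forall>a b. minimal_factorization M p e x a \<longrightarrow> minimal_factorization M p e x b
        \<longrightarrow> word_equiv M p a b)"

definition Pfin1 :: "('a::monoid_mult) set set" where
  "Pfin1 = {X. finite X \<and> X \<noteq> {} \<and> 1 \<in> X}"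

definition setmul :: "('a::monoid_mult) set \<Rightarrow> 'a set \<Rightarrow> 'a set" where
  "setmul X Y = {x * y | x y. x \<in> X \<and> y \<in> Y}"

definition gen_submonoid :: "'a::monoid_mult \<Rightarrow> 'a set" where
  "gen_submonoid x = range (\<lambda>n::nat. x ^ n)"

definition order_le :: "'a::monoid_mult \<Rightarrow> nat \<Rightarrow> bool" where
  "order_le x k \<longleftrightarrow> finite (gen_submonoid x) \<and> card (gen_submonoid x) \<le> k"

definition periodic :: "'a::monoid_mult itself \<Rightarrow> bool" where
  "periodic _ \<longleftrightarrow> (\<forall>x::'a. finite (gen_submonoid x))"

definition dedekind_finite :: "'a::monoid_mult itself \<Rightarrow> bool" where
  "dedekind_finite _ \<longleftrightarrow> (\<forall>x y::'a. x * y = 1 \<longrightarrow> y * x = 1)"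

end

theory Submission
  imports Defs
begin

lemma subseq_mset: "subseq d c \<Longrightarrow> mset d \<subseteq># mset c"
  by (induction rule: list_emb.induct) (auto intro: subset_mset.order_trans)

lemma setmul_1l: "setmul {1} X = (X::'a::monoid_mult set)"
  by (auto simp: setmul_def)
lemma setmul_1r: "setmul X {1} = (X::'a::monoid_mult set)"
  by (auto simp: setmul_def)

lemma one_P: "{1} \<in> (Pfin1 :: 'a::monoid_mult set set)"
  by (simp add: Pfin1_def)

lemma mdvd_refl: "X \<in> (Pfin1 :: 'a::monoid_mult set set) \<Longrightarrow> mdvd Pfin1 setmul X X"
  unfolding mdvd_def using one_P by (metis setmul_1l setmul_1r)

lemma mdvd_sub: "mdvd (Pfin1 :: 'a::monoid_mult set set) setmul X Y \<Longrightarrow> X \<subseteq> Y"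
proof
  fix z assume "mdvd (Pfin1 :: 'a::monoid_mult set set) setmul X Y" "z \<in> X"
  then obtain U V where UV: "U \<in> Pfin1" "V \<in> Pfin1" "Y = setmul (setmul U X) V"
    unfolding mdvd_def by blast
  have "1 * z \<in> setmul U X" using UV(1) \<open>z \<in> X\<close> unfolding setmul_def Pfin1_def by blast
  hence "1 * z * 1 \<in> Y" using UV(2,3) unfolding setmul_def Pfin1_def by blast
  thus "z \<in> Y" by simp
qed

lemma massoc_eq: "massoc (Pfin1 :: 'a::monoid_mult set set) setmul X Y \<Longrightarrow> X = Y"
  unfolding massoc_def using mdvd_sub by blast

lemma nud_iff: "non_unit_divisor (Pfin1 :: 'a::monoid_mult set set) setmul {1} X
   \<longleftrightarrow> X \<in> Pfin1 \<and> X \<noteq> {1}"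
proof -
  have "X \<in> Pfin1 \<Longrightarrow> unit_divisor (Pfin1 :: 'a::monoid_mult set set) setmul {1} X \<longleftrightarrow> X = {1}"
    unfolding unit_divisor_def using mdvd_sub[of X "{1}"] mdvd_refl[of "{1}"] one_P
    by (auto simp: Pfin1_def)
  thus ?thesis unfolding non_unit_divisor_def by blast
qed

lemma irr2: assumes "(a::'a::monoid_mult) \<noteq> 1"
  shows "mirreducible Pfin1 setmul {1} {1, a}"
proof -
  have P: "{1,a} \<in> (Pfin1 :: 'a set set)" by (simp add: Pfin1_def)
  have "X = {1}" if "X \<in> Pfin1" "mproper_dvd Pfin1 setmul X {1,a}" for X :: "'a set"
  proof -
    have "X \<subseteq> {1,a}" "X \<noteq> {1,a}" "1 \<in> X"
      using that mdvd_sub[of X "{1,a}"] mdvd_refl[OF P]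
      unfolding mproper_dvd_def massoc_def Pfin1_def by auto
    thus ?thesis by auto
  qed
  thus ?thesis unfolding mirreducible_def using nud_iff[of "{1,a}"] P assms
    by (auto simp: nud_iff)
qed

lemma wprod_simps: "wprod setmul {1} [] = {1}"
  "wprod setmul E (c # w) = setmul c (wprod setmul E w)"
  by (simp_all add: wprod_def)

lemma wprod_single: "wprod setmul {1} [c] = (c::'a::monoid_mult set)"
  by (simp add: wprod_def setmul_1r)

lemma subword_mset: assumes "subword_le (Pfin1 :: 'a::monoid_mult set set) setmul b a"
  shows "mset b \<subseteq># mset a"
proof -
  obtain c d where cd: "mset c = mset a" "subseq d c" "list_all2 (massoc Pfin1 setmul) b d"
    using assms unfolding subword_le_def by blast
  have "list_all2 (=) b d" using cd(3) by (rule list.rel_mono_strong) (simp add: massoc_eq)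
  hence "b = d" by (simp add: list.rel_eq)
  thus ?thesis using subseq_mset[OF cd(2)] cd(1) by simp
qed

lemma fact_P: "factorization (Pfin1 :: 'a::monoid_mult set set) setmul {1} X a \<Longrightarrow> set a \<subseteq> Pfin1"
  unfolding factorization_def mirreducible_def non_unit_divisor_def by blast

lemma la2_refl: "(\<And>x. x \<in> set a \<Longrightarrow> R x x) \<Longrightarrow> list_all2 R a a"
  by (induction a) auto

lemma subword_refl: "set a \<subseteq> (Pfin1 :: 'a::monoid_mult set set) \<Longrightarrow> mset a = mset b
   \<Longrightarrow> subword_le Pfin1 setmul a b"
  unfolding subword_le_def
  apply (rule exI[of _ a], rule exI[of _ a])
  apply (auto intro!: la2_refl simp: mdvd_refl massoc_def)
  done

lemma minimal_crit:
  assumes "factorization (Pfin1 :: 'a::monoid_mult set set) setmul {1} X a"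
    and "\<And>b. mset b \<subset># mset a \<Longrightarrow> wprod setmul {1} b \<noteq> X"
  shows "minimal_factorization Pfin1 setmul {1} X a"
  unfolding minimal_factorization_def
proof (intro conjI assms(1) notI, elim exE conjE)
  fix b assume b: "factorization Pfin1 setmul {1} X b" "subword_le Pfin1 setmul b a"
    "\<not> subword_le Pfin1 setmul a b"
  have "mset b \<subseteq># mset a" using subword_mset[OF b(2)] .
  moreover have "mset b \<noteq> mset a"
    using subword_refl[OF fact_P[OF assms(1)], of b] b(3) by auto
  ultimately have "mset b \<subset># mset a" by auto
  thus False using assms(2) b(1) unfolding factorization_def by blast
qed

lemma subword_len: "subword_le (Pfin1 :: 'a::monoid_mult set set) setmul b a \<Longrightarrow> length b \<le> length a"
  using subword_mset[of b a] by (metis size_mset size_mset_mono)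

lemma subset_len: "mset b \<subset># mset a \<Longrightarrow> length b < length a"
  by (metis size_mset mset_subset_size)

lemma subset_set: "mset b \<subset># mset a \<Longrightarrow> set b \<subseteq> set a"
  by (metis mset_subset_eqD set_mset_mset subset_iff subset_mset.less_imp_le)

lemma setmul22: "setmul {a, b} {c, d} = {a*c, a*d, b*c, b*(d::'a::monoid_mult)}"
  unfolding setmul_def by blast
lemma setmul23: "setmul {a, b} {c, d, e} = {a*c, a*d, a*e, b*c, b*d, b*(e::'a::monoid_mult)}"
  unfolding setmul_def by blast

lemma hmf_per:
  assumes H: "HmF (Pfin1::'a::monoid_mult set set) setmul {1}"
  shows "\<exists>i j. i < j \<and> j \<le> 3 \<and> (x::'a) ^ i = x ^ j"
proof (rule ccontr)
  assume "\<not> ?thesis"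
  hence ne: "\<And>i j. i < j \<Longrightarrow> j \<le> 3 \<Longrightarrow> x ^ i \<noteq> x ^ j" by blast
  have d: "1 \<noteq> x" "1 \<noteq> x^2" "1 \<noteq> x^3" "x \<noteq> x^2" "x \<noteq> x^3" "x^2 \<noteq> x^3"
    using ne[of 0 1] ne[of 0 2] ne[of 0 3] ne[of 1 2] ne[of 1 3] ne[of 2 3] by simp_all
  define A where "A = {1, x}"
  define B where "B = {1, x^2}"
  define X where "X = {1, x, x^2, x^3}"
  have e2: "x * x = x^2" "x * x^2 = x^3" by (simp_all add: power2_eq_square power3_eq_cube mult.assoc)
  have XP: "X \<in> Pfin1" by (simp add: X_def Pfin1_def)
  have AB: "setmul A B = X" unfolding A_def B_def X_def setmul22 using e2 by auto
  have AA: "setmul A A = {1, x, x^2}" unfolding A_def setmul22 using e2 by auto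
  have AAA: "setmul A {1, x, x^2} = X" unfolding A_def X_def setmul23 using e2 by auto
  have iA: "mirreducible Pfin1 setmul {1} A" unfolding A_def using irr2 d by metis
  have iB: "mirreducible Pfin1 setmul {1} B" unfolding B_def using irr2 d by metis
  have f1: "factorization Pfin1 setmul {1} X [A, B]"
    unfolding factorization_def using iA iB AB by (simp add: wprod_def setmul_1r)
  have f2: "factorization Pfin1 setmul {1} X [A, A, A]"
    unfolding factorization_def using iA AA AAA by (simp add: wprod_def setmul_1r)
  have m1: "minimal_factorization Pfin1 setmul {1} X [A, B]"
  proof (rule minimal_crit[OF f1])
    fix b :: "'a set list" assume "mset b \<subset># mset [A, B]"
    hence "length b < 2" "set b \<subseteq> {A, B}" using subset_len subset_set by fastforce+
    hence "b = [] \<or> b = [A] \<or> b = [B]"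
      by (cases b) auto
    thus "wprod setmul {1} b \<noteq> X"
      using d unfolding A_def B_def X_def by (auto simp: wprod_def setmul_1r) 
  qed
  have m2: "minimal_factorization Pfin1 setmul {1} X [A, A, A]"
  proof (rule minimal_crit[OF f2])
    fix b :: "'a set list" assume "mset b \<subset># mset [A, A, A]"
    hence "length b < 3" "set b \<subseteq> {A}" using subset_len subset_set by fastforce+
    hence "b = [] \<or> b = [A] \<or> b = [A, A]"
      by (cases b; cases "tl b") auto
    thus "wprod setmul {1} b \<noteq> X"
      using d AA unfolding X_def by (auto simp: wprod_def setmul_1r A_def) 
  qed
  show False using H m1 m2 XP unfolding HmF_def by fastforce
qed

lemma umf_hmf: "UmF (Pfin1::'a::monoid_mult set set) setmul {1} \<Longrightarrow> HmF (Pfin1::'a set set) setmul {1}"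
  unfolding UmF_def HmF_def word_equiv_def using subword_len by (meson le_antisym)

lemma umf_per:
  assumes U: "UmF (Pfin1::'a::monoid_mult set set) setmul {1}"
  shows "\<exists>i j. i < j \<and> j \<le> 2 \<and> (x::'a) ^ i = x ^ j"
proof (rule ccontr)
  assume "\<not> ?thesis"
  hence ne: "\<And>i j. i < j \<Longrightarrow> j \<le> 2 \<Longrightarrow> x ^ i \<noteq> x ^ j" by blast
  have d: "1 \<noteq> x" "1 \<noteq> x^2" "x \<noteq> x^2"
    using ne[of 0 1] ne[of 0 2] ne[of 1 2] by simp_all
  obtain i j where ij: "i < j" "j \<le> 3" "x ^ i = x ^ j" using hmf_per[OF umf_hmf[OF U]] by blast
  have "j = 3" using ij ne by (metis le_Suc_eq numeral_3_eq_3 numeral_2_eq_2)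
  hence "i = 0 \<or> i = 1 \<or> i = 2" using ij by auto
  hence x3: "x^3 \<in> {1, x, x^2}" using ij \<open>j = 3\<close> by auto
  define A where "A = {1, x}"
  define C where "C = {1, x^2}"
  define X where "X = {1, x, x^2}"
  have e2: "x * x = x^2" "x * x^2 = x^3" by (simp_all add: power2_eq_square power3_eq_cube mult.assoc)
  have XP: "X \<in> Pfin1" by (simp add: X_def Pfin1_def)
  have AC: "setmul A C = X" unfolding A_def C_def X_def setmul22 using e2 x3 by auto
  have AA: "setmul A A = X" unfolding A_def X_def setmul22 using e2 by auto
  have iA: "mirreducible Pfin1 setmul {1} A" unfolding A_def using irr2 d by metis
  have iC: "mirreducible Pfin1 setmul {1} C" unfolding C_def using irr2 d by metis
  have AneC: "A \<noteq> C" unfolding A_def C_def using d by auto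
  have f1: "factorization Pfin1 setmul {1} X [A, C]"
    unfolding factorization_def using iA iC AC by (simp add: wprod_def setmul_1r)
  have f2: "factorization Pfin1 setmul {1} X [A, A]"
    unfolding factorization_def using iA AA by (simp add: wprod_def setmul_1r)
  have m1: "minimal_factorization Pfin1 setmul {1} X [A, C]"
  proof (rule minimal_crit[OF f1])
    fix b :: "'a set list" assume "mset b \<subset># mset [A, C]"
    hence "length b < 2" "set b \<subseteq> {A, C}" using subset_len subset_set by fastforce+
    hence "b = [] \<or> b = [A] \<or> b = [C]"
      by (cases b) auto
    thus "wprod setmul {1} b \<noteq> X"
      using d unfolding A_def C_def X_def by (auto simp: wprod_def setmul_1r) 
  qed
  have m2: "minimal_factorization Pfin1 setmul {1} X [A, A]"
  proof (rule minimal_crit[OF f2])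
    fix b :: "'a set list" assume "mset b \<subset># mset [A, A]"
    hence "length b < 2" "set b \<subseteq> {A}" using subset_len subset_set by fastforce+
    hence "b = [] \<or> b = [A]"
      by (cases b) auto
    thus "wprod setmul {1} b \<noteq> X"
      using d unfolding X_def by (auto simp: wprod_def setmul_1r A_def) 
  qed
  have "word_equiv Pfin1 setmul [A, A] [A, C]" using U m1 m2 XP unfolding UmF_def by blast
  hence "mset [A, A] \<subseteq># mset [A, C]" unfolding word_equiv_def using subword_mset by blast
  thus False using AneC by (auto simp: subseteq_mset_def split: if_splits)
qed

lemma per_order: assumes "i < j" "(x::'a::monoid_mult) ^ i = x ^ j" shows "order_le x j"
proof -
  have "x ^ n \<in> (\<lambda>k. x ^ k) ` {..<j}" for n
  proof (induction n rule: less_induct)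
    case (less n)
    show ?case
    proof (cases "n < j")
      case True thus ?thesis by auto
    next
      case False
      hence "x ^ n = x ^ (n - j) * x ^ j" by (metis le_add_diff_inverse2 not_less power_add)
      also have "\<dots> = x ^ (n - j + i)" using assms by (simp add: power_add)
      finally show ?thesis using less.IH[of "n - j + i"] assms False by auto
    qed
  qed
  hence "gen_submonoid x \<subseteq> (\<lambda>k. x ^ k) ` {..<j}" unfolding gen_submonoid_def by auto
  moreover have "card ((\<lambda>k. x ^ k) ` {..<j}) \<le> j" by (metis card_image_le card_lessThan finite_lessThan)
  ultimately show ?thesis unfolding order_le_def by (meson card_mono finite_imageI finite_lessThan finite_subset le_trans)
qed

lemma pow_inv: "(x::'a::monoid_mult) * y = 1 \<Longrightarrow> x ^ n * y ^ n = 1"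
proof (induction n)
  case (Suc n)
  have "x ^ Suc n * y ^ Suc n = x ^ n * (x * y) * y ^ n" by (simp only: power_Suc2[of x] power_Suc[of y] mult.assoc)
  thus ?case using Suc by simp
qed simp

lemma per_df: assumes "i < j" "(y::'a::monoid_mult) ^ i = y ^ j" "x * y = 1" shows "y * x = 1"
proof -
  have "y ^ j = y ^ i * y ^ (j - i)" using assms(1) by (metis le_add_diff_inverse less_imp_le power_add)
  hence "y ^ (j - i) = x ^ i * y ^ i * y ^ (j - i)" using pow_inv[OF assms(3)] by simp
  also have "\<dots> = x ^ i * y ^ j" using \<open>y ^ j = _\<close> by (simp add: mult.assoc)
  also have "\<dots> = 1" using assms(2)[symmetric] pow_inv[OF assms(3), of i] by simp
  finally have k: "y ^ (j - i) = 1" .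
  define z where "z = y ^ (j - i - 1)"
  have yz: "y * z = 1" "z * y = 1" using k assms(1) unfolding z_def
    by (metis Suc_diff_Suc diff_Suc_1 power_Suc power_Suc2 zero_less_diff)+
  have "x = x * (y * z)" using yz by simp
  also have "\<dots> = z" using assms(3) by (simp add: mult.assoc[symmetric])
  finally show ?thesis using yz by simp
qed

theorem lemma3p4:
  fixes H :: "'a::monoid_mult itself"
  shows "(HmF (Pfin1::'a set set) setmul {1} \<longrightarrow>
            (\<forall>x::'a. order_le x 3) \<and> periodic H \<and> dedekind_finite H) \<and>
         (UmF (Pfin1::'a set set) setmul {1} \<longrightarrow>
            (\<forall>x::'a. order_le x 2) \<and> periodic H \<and> dedekind_finite H)"
proof -
  have gen: "(\<forall>x::'a. order_le x k) \<and> periodic H \<and> dedekind_finite H"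
    if P: "\<And>x::'a. \<exists>i j. i < j \<and> j \<le> k \<and> x ^ i = x ^ j" for k
  proof (intro conjI allI)
    fix x :: 'a
    obtain i j where "i < j" "j \<le> k" "x ^ i = x ^ j" using P by blast
    thus "order_le x k" using per_order unfolding order_le_def by fastforce
  next
    show "periodic H" unfolding periodic_def
    proof
      fix x :: 'a
      obtain i j where "i < j" "x ^ i = x ^ j" using P by blast
      thus "finite (gen_submonoid x)" using per_order unfolding order_le_def by blast
    qed
  next
    show "dedekind_finite H" unfolding dedekind_finite_def
    proof (intro allI impI)
      fix x y :: 'a assume "x * y = 1"
      obtain i j where "i < j" "y ^ i = y ^ j" using P by blast
      thus "y * x = 1" using per_df \<open>x * y = 1\<close> by blast
    qed
  qed
  show ?thesis using gen[OF hmf_per] gen[OF umf_per] by blast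
qed

end
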